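(* Let $F\in\mathbb{R}[x_1,\dots,x_n]$ be a form of degree $d$ with $F(X)>0$ for all $X\in\mathbb{T}_n=\{(x_1,\dots,x_n): x_i\ge0,\ \sum_i x_i=1\}$. Then there exists $M$ such that for every $m\ge M$ and every choice of $B_{[\alpha_1]},\dots,B_{[\alpha_m]}\in PW_n$, the form $F(B_{[\alpha_1]}\cdots B_{[\alpha_m]}X^{\mathrm{Tr}})$ is nonlacunary and trivially positive, i.e., every monomial $x_1^{i_1}\cdots x_n^{i_n}$ with $i_1+\cdots+i_n=d$ occurs in it with a strictly positive coefficient.
   Context: $W_n$ is the $n\times n$ matrix with $(W_n)_{ij}=1/j$ for $i\le j$ and $0$ for $i>j$. For a permutation $[k_1\cdots k_n]$ of $1,\dots,n$, $P_{[k_1\cdots k_n]}$ is the permutation matrix with $1$ in positions $(i,k_i)$ and $0$ elsewhere, and $B_{[k_1\cdots k_n]}=P_{[k_1\cdots k_n]}W_n$; $PW_n$ denotes the set of these $n!$ matrices. $X=(x_1,\dots,x_n)$. *)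

theory Defs
  imports Complex_Main "HOL-Combinatorics.Permutations"
begin

(* n x n real matrices as functions, indices 0..n-1 (entries outside are 0);
   vectors as functions nat => real, only indices < n matter. *)

definition monomials :: "nat \<Rightarrow> nat \<Rightarrow> (nat \<Rightarrow> nat) set" where
  "monomials n d = {\<alpha>. (\<forall>i\<ge>n. \<alpha> i = 0) \<and> (\<Sum>i<n. \<alpha> i) = d}"

definition form_eval :: "nat \<Rightarrow> nat \<Rightarrow> ((nat \<Rightarrow> nat) \<Rightarrow> real) \<Rightarrow> (nat \<Rightarrow> real) \<Rightarrow> real" where
  "form_eval n d c X = (\<Sum>\<alpha>\<in>monomials n d. c \<alpha> * (\<Prod>i<n. X i ^ \<alpha> i))"

definition Wmat :: "nat \<Rightarrow> nat \<Rightarrow> nat \<Rightarrow> real" where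
  "Wmat n i j = (if i < n \<and> j < n \<and> i \<le> j then 1 / real (j + 1) else 0)"

definition perm_mat :: "nat \<Rightarrow> (nat \<Rightarrow> nat) \<Rightarrow> nat \<Rightarrow> nat \<Rightarrow> real" where
  "perm_mat n k i j = (if i < n \<and> j < n \<and> j = k i then 1 else 0)"

definition mat_mult :: "nat \<Rightarrow> (nat \<Rightarrow> nat \<Rightarrow> real) \<Rightarrow> (nat \<Rightarrow> nat \<Rightarrow> real) \<Rightarrow> nat \<Rightarrow> nat \<Rightarrow> real" where
  "mat_mult n A B i j = (\<Sum>l<n. A i l * B l j)"

definition id_mat :: "nat \<Rightarrow> nat \<Rightarrow> nat \<Rightarrow> real" where
  "id_mat n i j = (if i < n \<and> i = j then 1 else 0)"

definition mat_vec :: "nat \<Rightarrow> (nat \<Rightarrow> nat \<Rightarrow> real) \<Rightarrow> (nat \<Rightarrow> real) \<Rightarrow> nat \<Rightarrow> real" where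
  "mat_vec n A X i = (\<Sum>j<n. A i j * X j)"

definition mat_prod_list :: "nat \<Rightarrow> (nat \<Rightarrow> nat \<Rightarrow> real) list \<Rightarrow> nat \<Rightarrow> nat \<Rightarrow> real" where
  "mat_prod_list n Bs = foldr (mat_mult n) Bs (id_mat n)"

definition PW :: "nat \<Rightarrow> (nat \<Rightarrow> nat \<Rightarrow> real) set" where
  "PW n = {mat_mult n (perm_mat n k) (Wmat n) | k. k permutes {..<n}}"

end

theory Submission
  imports Defs "HOL-Analysis.Analysis"
begin

lemma coord_cont[continuous_intros]: "continuous_on S (\<lambda>x::nat\<Rightarrow>real. x i)"
  by (rule continuous_on_subset[OF continuous_on_product_coordinates]) simp

lemma form_eval_restrict:
  "form_eval n d c (\<lambda>i. if i < n then p i else 0) = form_eval n d c p"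
  unfolding form_eval_def by (intro sum.cong refl arg_cong2[where f="(*)"] prod.cong) auto

lemma form_min:
  assumes n: "n \<ge> 1"
    and pos: "\<forall>X. (\<forall>i<n. X i \<ge> 0) \<and> (\<Sum>i<n. X i) = 1 \<longrightarrow> form_eval n d c X > 0"
  shows "\<exists>\<delta>>0. \<forall>p. (\<forall>i<n. p i \<ge> 0) \<and> (\<Sum>i<n. p i) = 1 \<longrightarrow> form_eval n d c p \<ge> \<delta>"
proof -
  define K where "K = PiE UNIV (\<lambda>i. if i<n then {0..1::real} else {0}) \<inter> {p. (\<Sum>i<n. p i) = 1}"
  have c1: "compact (PiE UNIV (\<lambda>i. if i<n then {0..1::real} else {0}))"
  proof -
    have "compactin (product_topology (\<lambda>i. euclidean) UNIV) (PiE UNIV (\<lambda>i. if i<n then {0..1::real} else {0}))"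
      unfolding compactin_PiE by auto
    then show ?thesis unfolding euclidean_product_topology by simp
  qed
  have c2: "closed {p::nat\<Rightarrow>real. (\<Sum>i<n. p i) = 1}"
    by (intro closed_Collect_eq continuous_intros)
  have cK: "compact K" unfolding K_def using c1 c2 by (rule compact_Int_closed)
  have e: "(\<lambda>i. if i = 0 then 1 else 0::real) \<in> K" using n unfolding K_def by (auto simp: PiE_iff)
  have cont: "continuous_on K (form_eval n d c)"
    unfolding form_eval_def by (intro continuous_intros)
  obtain x where xK: "x \<in> K" and xmin: "\<forall>y\<in>K. form_eval n d c x \<le> form_eval n d c y"
    using continuous_attains_inf[OF cK _ cont] e by blast
  have "\<forall>i<n. 0 \<le> x i"
  proof (intro allI impI)
    fix i assume "i < n"
    then have "x i \<in> {0..1}" using xK unfolding K_def by (auto simp: PiE_iff dest!: spec[of _ i])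
    then show "0 \<le> x i" by simp
  qed
  moreover have "(\<Sum>i<n. x i) = 1" using xK unfolding K_def by simp
  ultimately have "form_eval n d c x > 0" using pos by blast
  moreover have "form_eval n d c x \<le> form_eval n d c p" if "\<forall>i<n. p i \<ge> 0" "(\<Sum>i<n. p i) = 1" for p
  proof -
    have "p i \<le> 1" if "i < n" for i
    proof -
      have "p i \<le> (\<Sum>i<n. p i)" using that \<open>\<forall>i<n. p i \<ge> 0\<close> by (intro member_le_sum) auto
      then show ?thesis using \<open>(\<Sum>i<n. p i) = 1\<close> by simp
    qed
    then have "(\<lambda>i. if i < n then p i else 0) \<in> K" using that unfolding K_def
      by (auto simp: PiE_iff)
    then show ?thesis using xmin form_eval_restrict by metis
  qed
  ultimately show ?thesis by blast
qed

definition Wd :: "nat \<Rightarrow> nat \<Rightarrow> (nat \<Rightarrow> nat) set" where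
  "Wd n d = PiE {..<d} (\<lambda>_. {..<n})"
definition cnt :: "nat \<Rightarrow> (nat \<Rightarrow> nat) \<Rightarrow> nat \<Rightarrow> nat" where
  "cnt d w = (\<lambda>j. card {t\<in>{..<d}. w t = j})"

lemma finite_Wd: "finite (Wd n d)" unfolding Wd_def by (intro finite_PiE) auto

lemma finite_monomials: "finite (monomials n d)"
proof -
  have "monomials n d \<subseteq> (\<lambda>g. \<lambda>i. if i<n then g i else 0) ` (PiE {..<n} (\<lambda>_. {..d}))"
  proof
    fix \<alpha> assume a: "\<alpha> \<in> monomials n d"
    have le: "\<alpha> i \<le> d" if "i < n" for i
    proof -
      have "\<alpha> i \<le> (\<Sum>i<n. \<alpha> i)" using that by (intro member_le_sum) auto
      then show ?thesis using a by (simp add: monomials_def)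
    qed
    have "\<alpha> = (\<lambda>i. if i<n then restrict \<alpha> {..<n} i else 0)" using a by (auto simp: monomials_def)
    moreover have "restrict \<alpha> {..<n} \<in> PiE {..<n} (\<lambda>_. {..d})" using le by auto
    ultimately show "\<alpha> \<in> (\<lambda>g. \<lambda>i. if i<n then g i else 0) ` (PiE {..<n} (\<lambda>_. {..d}))" by blast
  qed
  then show ?thesis by (rule finite_subset) (intro finite_imageI finite_PiE, auto)
qed

lemma cnt_mono: assumes "w \<in> Wd n d" shows "cnt d w \<in> monomials n d"
proof -
  have "cnt d w i = 0" if "i \<ge> n" for i
  proof -
    have "{t\<in>{..<d}. w t = i} = {}" using assms that unfolding Wd_def PiE_iff by (metis (mono_tags, lifting) empty_Collect_eq leD lessThan_iff)
    then show ?thesis by (simp add: cnt_def)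
  qed
  moreover have "(\<Sum>i<n. cnt d w i) = d"
  proof -
    have "(\<Sum>i<n. \<Sum>t\<in>{x. x \<in> {..<d} \<and> w x = i}. (1::nat)) = (\<Sum>t<d. 1)"
      using assms unfolding Wd_def by (intro sum.group) (auto simp: PiE_iff)
    then show ?thesis by (simp add: cnt_def)
  qed
  ultimately show ?thesis by (simp add: monomials_def)
qed

lemma prod_cnt: assumes "w \<in> Wd n d"
  shows "(\<Prod>t<d. y (w t)) = (\<Prod>j<n. (y j :: 'a::comm_monoid_mult) ^ cnt d w j)"
proof -
  have "(\<Prod>j<n. \<Prod>t\<in>{x. x \<in> {..<d} \<and> w x = j}. y (w t)) = (\<Prod>t<d. y (w t))"
    using assms unfolding Wd_def by (intro prod.group) (auto simp: PiE_iff)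
  moreover have "(\<Prod>t\<in>{x. x \<in> {..<d} \<and> w x = j}. y (w t)) = y j ^ cnt d w j" for j
    by (simp add: cnt_def)
  ultimately show ?thesis by simp
qed

lemma word_exists: assumes "\<alpha> \<in> monomials n d" shows "\<exists>u\<in>Wd n d. cnt d u = \<alpha>"
proof -
  define S where "S = (SIGMA i:{..<n}. {..<\<alpha> i})"
  have "card S = d" using assms unfolding S_def monomials_def by (simp add: card_SigmaI)
  then obtain h where h: "bij_betw h {..<d} S"
    using finite_same_card_bij[of "{..<d}" S] unfolding S_def by auto
  define u where "u = restrict (\<lambda>t. fst (h t)) {..<d}"
  have "fst (h t) < n" if "t < d" for t
  proof -
    have "h t \<in> S" using h that unfolding bij_betw_def by auto
    then show ?thesis unfolding S_def by auto
  qed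
  then have "u \<in> Wd n d" unfolding Wd_def u_def by auto
  moreover have "cnt d u j = \<alpha> j" for j
  proof -
    have "h ` {t\<in>{..<d}. u t = j} = {q\<in>S. fst q = j}"
      using h unfolding bij_betw_def u_def by auto
    moreover have inj: "inj_on h {t\<in>{..<d}. u t = j}" 
    proof (rule inj_on_subset)
      show "inj_on h {..<d}" using h unfolding bij_betw_def by blast
    qed auto
    ultimately have "cnt d u j = card {q\<in>S. fst q = j}" unfolding cnt_def
      using card_image[OF inj] by simp
    also have "{q\<in>S. fst q = j} = (if j < n then {j} \<times> {..<\<alpha> j} else {})" unfolding S_def by auto
    also have "card \<dots> = \<alpha> j" using assms by (auto simp: monomials_def card_cartesian_product)
    finally show ?thesis .
  qed
  ultimately show ?thesis by auto
qed

definition us :: "nat \<Rightarrow> nat \<Rightarrow> (nat \<Rightarrow> nat) \<Rightarrow> nat \<Rightarrow> nat" where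
  "us n d \<alpha> = (SOME u. u \<in> Wd n d \<and> cnt d u = \<alpha>)"

lemma us: assumes "\<alpha> \<in> monomials n d" shows "us n d \<alpha> \<in> Wd n d" "cnt d (us n d \<alpha>) = \<alpha>"
  using someI_ex[OF word_exists[OF assms, unfolded Bex_def]] unfolding us_def by auto

definition HH :: "nat \<Rightarrow> nat \<Rightarrow> ((nat \<Rightarrow> nat) \<Rightarrow> real) \<Rightarrow> (nat \<Rightarrow> nat \<Rightarrow> real) \<Rightarrow> (nat \<Rightarrow> nat) \<Rightarrow> real" where
  "HH n d c A w = (\<Sum>\<alpha>\<in>monomials n d. c \<alpha> * (\<Prod>t<d. A (us n d \<alpha> t) (w t)))"

definition GG :: "nat \<Rightarrow> nat \<Rightarrow> ((nat \<Rightarrow> nat) \<Rightarrow> real) \<Rightarrow> (nat \<Rightarrow> nat \<Rightarrow> real) \<Rightarrow> (nat \<Rightarrow> nat) \<Rightarrow> real" where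
  "GG n d c A \<beta> = (\<Sum>w\<in>{x. x \<in> Wd n d \<and> cnt d x = \<beta>}. HH n d c A w)"

lemma expand: "form_eval n d c (mat_vec n A X) = form_eval n d (GG n d c A) X"
proof -
  let ?Q = "\<lambda>w. \<Prod>t<d. X (w t)"
  have step: "(\<Prod>i<n. mat_vec n A X i ^ \<alpha> i) = (\<Sum>w\<in>Wd n d. (\<Prod>t<d. A (us n d \<alpha> t) (w t)) * ?Q w)"
    if a: "\<alpha> \<in> monomials n d" for \<alpha>
  proof -
    have "(\<Prod>i<n. mat_vec n A X i ^ \<alpha> i) = (\<Prod>t<d. mat_vec n A X (us n d \<alpha> t))"
      using prod_cnt[OF us(1)[OF a], of "mat_vec n A X"] us(2)[OF a] by simp
    also have "\<dots> = (\<Prod>t<d. \<Sum>j<n. A (us n d \<alpha> t) j * X j)" by (simp add: mat_vec_def)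
    also have "\<dots> = (\<Sum>w\<in>Wd n d. \<Prod>t<d. A (us n d \<alpha> t) (w t) * X (w t))"
      unfolding Wd_def by (rule prod_sum_PiE) auto
    also have "\<dots> = (\<Sum>w\<in>Wd n d. (\<Prod>t<d. A (us n d \<alpha> t) (w t)) * ?Q w)"
      by (simp add: prod.distrib)
    finally show ?thesis .
  qed
  have "form_eval n d c (mat_vec n A X) = (\<Sum>\<alpha>\<in>monomials n d. c \<alpha> * (\<Sum>w\<in>Wd n d. (\<Prod>t<d. A (us n d \<alpha> t) (w t)) * ?Q w))"
    unfolding form_eval_def using step by simp
  also have "\<dots> = (\<Sum>w\<in>Wd n d. HH n d c A w * ?Q w)"
    unfolding HH_def sum_distrib_left sum_distrib_right
    by (subst sum.swap) (simp add: mult.assoc)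
  also have "\<dots> = (\<Sum>w\<in>Wd n d. HH n d c A w * (\<Prod>j<n. X j ^ cnt d w j))"
    by (intro sum.cong refl) (simp add: prod_cnt)
  also have "\<dots> = (\<Sum>\<beta>\<in>monomials n d. \<Sum>w\<in>{x. x \<in> Wd n d \<and> cnt d x = \<beta>}. HH n d c A w * (\<Prod>j<n. X j ^ cnt d w j))"
    by (rule sum.group[symmetric]) (auto simp: finite_Wd finite_monomials cnt_mono)
  also have "\<dots> = (\<Sum>\<beta>\<in>monomials n d. GG n d c A \<beta> * (\<Prod>j<n. X j ^ \<beta> j))"
    unfolding GG_def sum_distrib_right by (intro sum.cong refl) auto
  finally show ?thesis unfolding form_eval_def .
qed

lemma foldr_mult: "i < n \<Longrightarrow> foldr (mat_mult n) Bs M i j = (\<Sum>l<n. mat_prod_list n Bs i l * M l j)"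
proof (induction Bs arbitrary: i)
  case Nil
  have "(\<Sum>l<n. id_mat n i l * M l j) = (\<Sum>l<n. if l = i then M i j else 0)"
    by (intro sum.cong) (auto simp: id_mat_def)
  then show ?case using Nil by (simp add: mat_prod_list_def)
next
  case (Cons B Bs)
  have "foldr (mat_mult n) (B # Bs) M i j = (\<Sum>l<n. B i l * (\<Sum>k<n. mat_prod_list n Bs l k * M k j))"
    unfolding foldr_Cons comp_def mat_mult_def[of n B] using Cons.IH by simp
  also have "\<dots> = (\<Sum>k<n. (\<Sum>l<n. B i l * mat_prod_list n Bs l k) * M k j)"
    unfolding sum_distrib_left sum_distrib_right by (subst sum.swap) (simp add: mult.assoc)
  also have "\<dots> = (\<Sum>k<n. mat_prod_list n (B # Bs) i k * M k j)"
    by (simp add: mat_prod_list_def mat_mult_def)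
  finally show ?case .
qed

lemma prod_snoc: assumes "i < n" "j < n"
  shows "mat_prod_list n (Bs @ [B]) i j = (\<Sum>l<n. mat_prod_list n Bs i l * B l j)"
proof -
  have "mat_prod_list n (Bs @ [B]) i j = foldr (mat_mult n) Bs (mat_mult n B (id_mat n)) i j"
    by (simp add: mat_prod_list_def)
  also have "\<dots> = (\<Sum>l<n. mat_prod_list n Bs i l * mat_mult n B (id_mat n) l j)"
    by (rule foldr_mult[OF assms(1)])
  also have "\<dots> = (\<Sum>l<n. mat_prod_list n Bs i l * B l j)"
  proof (intro sum.cong refl)
    fix l assume "l \<in> {..<n}"
    have "mat_mult n B (id_mat n) l j = (\<Sum>q<n. if q = j then B l j else 0)"
      unfolding mat_mult_def by (intro sum.cong) (auto simp: id_mat_def)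
    then show "mat_prod_list n Bs i l * mat_mult n B (id_mat n) l j = mat_prod_list n Bs i l * B l j"
      using assms by simp
  qed
  finally show ?thesis .
qed

lemma PW_entry: assumes "B \<in> PW n"
  shows "\<exists>k. k permutes {..<n} \<and> (\<forall>l<n. \<forall>j<n. B l j = (if k l \<le> j then 1 / real (j+1) else 0))"
proof -
  obtain k where k: "k permutes {..<n}" and B: "B = mat_mult n (perm_mat n k) (Wmat n)"
    using assms unfolding PW_def by auto
  have "B l j = (if k l \<le> j then 1 / real (j+1) else 0)" if "l < n" "j < n" for l j
  proof -
    have "k l \<in> {..<n} \<longleftrightarrow> l \<in> {..<n}" by (rule permutes_in_image[OF k])
    then have "k l \<in> {..<n}" using that by simp
    then have kl: "k l < n" by simp
    have "B l j = (\<Sum>q<n. (if q = k l then Wmat n q j else 0))"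
      unfolding B mat_mult_def perm_mat_def using that by (intro sum.cong refl) auto
    also have "\<dots> = Wmat n (k l) j" using kl by simp
    finally show ?thesis using kl that by (simp add: Wmat_def)
  qed
  then show ?thesis using k by blast
qed

lemma avg_osc:
  fixes a :: "nat \<Rightarrow> real"
  assumes fin: "finite T'" and sub: "T \<subseteq> T'" and ne: "T \<noteq> {}" and cT: "card T' \<le> n"
    and osc: "\<forall>l\<in>T'. \<forall>l'\<in>T'. \<bar>a l - a l'\<bar> \<le> \<delta>"
  shows "\<bar>sum a T' / card T' - sum a T / card T\<bar> \<le> (1 - 1 / real n) * \<delta>"
proof -
  have finT: "finite T" using fin sub finite_subset by blast
  have cpos: "card T > 0" using finT ne by (simp add: card_gt_0_iff)
  have cle: "card T \<le> card T'" using fin sub card_mono by blast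
  have c'pos: "card T' > 0" using cpos cle by simp
  have npos: "n > 0" using c'pos cT by simp
  have d0: "\<delta> \<ge> 0" using osc ne sub by force
  define \<mu> where "\<mu> = sum a T / card T"
  have bnd: "\<bar>a l - \<mu>\<bar> \<le> \<delta>" if "l \<in> T'" for l
  proof -
    have "a l - \<mu> = (\<Sum>l'\<in>T. a l - a l') / card T"
      using cpos by (simp add: \<mu>_def sum_subtractf field_simps)
    also have "\<bar>\<dots>\<bar> = \<bar>\<Sum>l'\<in>T. a l - a l'\<bar> / card T" by simp
    also have "\<dots> \<le> (\<Sum>l'\<in>T. \<delta>) / card T"
    proof (rule divide_right_mono)
      show "\<bar>\<Sum>l'\<in>T. a l - a l'\<bar> \<le> (\<Sum>l'\<in>T. \<delta>)"
        using osc sub that by (intro order.trans[OF sum_abs] sum_mono) auto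
    qed simp
    also have "\<dots> = \<delta>" using cpos by simp
    finally show ?thesis .
  qed
  have z: "(\<Sum>l\<in>T. a l - \<mu>) = 0" using cpos by (simp add: \<mu>_def sum_subtractf)
  have "(\<Sum>l\<in>T'. a l - \<mu>) = (\<Sum>l\<in>T'-T. a l - \<mu>) + (\<Sum>l\<in>T. a l - \<mu>)"
    using fin sub by (metis sum.subset_diff)
  then have e: "(\<Sum>l\<in>T'. a l - \<mu>) = (\<Sum>l\<in>T'-T. a l - \<mu>)" using z by simp
  have "sum a T' / card T' - \<mu> = (\<Sum>l\<in>T'. a l - \<mu>) / card T'"
    using c'pos by (simp add: sum_subtractf field_simps)
  also have "\<dots> = (\<Sum>l\<in>T'-T. a l - \<mu>) / card T'" using e by simp
  finally have eq: "sum a T' / card T' - \<mu> = (\<Sum>l\<in>T'-T. a l - \<mu>) / card T'" .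
  have "\<bar>\<Sum>l\<in>T'-T. a l - \<mu>\<bar> \<le> (\<Sum>l\<in>T'-T. \<delta>)"
    using bnd by (intro order.trans[OF sum_abs] sum_mono) auto
  also have "\<dots> = real (card T' - card T) * \<delta>" using fin sub finT by (simp add: card_Diff_subset)
  also have "\<dots> \<le> (real (card T') - 1) * \<delta>" using cpos cle d0 by (intro mult_right_mono) auto
  finally have b1: "\<bar>\<Sum>l\<in>T'-T. a l - \<mu>\<bar> \<le> (real (card T') - 1) * \<delta>" .
  have "(real (card T') - 1) / card T' = 1 - 1 / card T'" using c'pos by (simp add: field_simps)
  also have "\<dots> \<le> 1 - 1 / real n" using c'pos cT by (simp add: frac_le)
  finally have b2: "(real (card T') - 1) / card T' \<le> 1 - 1 / real n" .
  have "\<bar>sum a T' / card T' - \<mu>\<bar> = \<bar>\<Sum>l\<in>T'-T. a l - \<mu>\<bar> / card T'" using eq by simp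
  also have "\<dots> \<le> (real (card T') - 1) * \<delta> / card T'" using b1 c'pos by (simp add: divide_right_mono)
  also have "\<dots> = ((real (card T') - 1) / card T') * \<delta>" by simp
  also have "\<dots> \<le> (1 - 1 / real n) * \<delta>" using b2 d0 by (rule mult_right_mono)
  finally show ?thesis unfolding \<mu>_def .
qed

definition inv_ok :: "nat \<Rightarrow> (nat \<Rightarrow> nat \<Rightarrow> real) \<Rightarrow> real \<Rightarrow> bool" where
  "inv_ok n A \<delta> \<longleftrightarrow> (\<forall>i<n. \<forall>j<n. 0 \<le> A i j) \<and> (\<forall>j<n. (\<Sum>i<n. A i j) = 1) \<and>
     (\<forall>i<n. \<forall>j<n. \<forall>j'<n. \<bar>A i j - A i j'\<bar> \<le> \<delta>)"

lemma inv_step: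
  assumes n: "n \<ge> 1" and I: "inv_ok n A \<delta>" and k: "k permutes {..<n}"
    and A': "\<And>i j. i < n \<Longrightarrow> j < n \<Longrightarrow> A' i j = (\<Sum>l<n. A i l * (if k l \<le> j then 1 / real (j+1) else 0))"
  shows "inv_ok n A' ((1 - 1 / real n) * \<delta>)"
proof -
  define T where "T j = {l\<in>{..<n}. k l \<le> j}" for j
  have finT: "finite (T j)" for j unfolding T_def by auto
  have Tsub: "T j \<subseteq> {..<n}" for j unfolding T_def by auto
  have cardT: "card (T j) = j + 1" if "j < n" for j
  proof -
    have inj: "inj_on k (T j)" using permutes_inj_on[OF k] .
    have "k ` T j = {..j}"
    proof
      show "k ` T j \<subseteq> {..j}" unfolding T_def by auto
      show "{..j} \<subseteq> k ` T j"
      proof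
        fix y assume y: "y \<in> {..j}"
        then have "y \<in> k ` {..<n}" using permutes_image[OF k] that by auto
        then obtain l where "l < n" "y = k l" by auto
        then show "y \<in> k ` T j" using y unfolding T_def by auto
      qed
    qed
    then show ?thesis using card_image[OF inj] by simp
  qed
  have A'T: "A' i j = sum (A i) (T j) / card (T j)" if "i < n" "j < n" for i j
  proof -
    have "A' i j = (\<Sum>l<n. if k l \<le> j then A i l / real (j+1) else 0)"
      unfolding A'[OF that] by (intro sum.cong refl) auto
    also have "\<dots> = (\<Sum>l\<in>T j. A i l / real (j+1))"
      unfolding T_def by (rule sum.inter_filter[symmetric]) simp
    also have "\<dots> = sum (A i) (T j) / card (T j)" using cardT[OF that(2)] by (simp add: sum_divide_distrib)
    finally show ?thesis .
  qed
  have nn: "\<forall>i<n. \<forall>j<n. 0 \<le> A' i j"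
  proof (intro allI impI)
    fix i j assume "i < n" "j < n"
    then show "0 \<le> A' i j" unfolding A'T[OF \<open>i<n\<close> \<open>j<n\<close>] using I Tsub
      by (intro divide_nonneg_nonneg sum_nonneg) (auto simp: inv_ok_def)
  qed
  have cs: "\<forall>j<n. (\<Sum>i<n. A' i j) = 1"
  proof (intro allI impI)
    fix j assume j: "j < n"
    have "(\<Sum>i<n. A' i j) = (\<Sum>i<n. sum (A i) (T j)) / card (T j)"
      using A'T j by (simp add: sum_divide_distrib)
    also have "(\<Sum>i<n. sum (A i) (T j)) = (\<Sum>l\<in>T j. \<Sum>i<n. A i l)" by (rule sum.swap)
    also have "\<dots> = (\<Sum>l\<in>T j. 1)"
    proof (intro sum.cong refl)
      fix l assume "l \<in> T j"
      then have "l < n" using Tsub by blast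
      then show "(\<Sum>i<n. A i l) = 1" using I by (simp add: inv_ok_def)
    qed
    also have "\<dots> / card (T j) = 1" using cardT[OF j] by simp
    finally show "(\<Sum>i<n. A' i j) = 1" .
  qed
  have osc1: "\<bar>A' i j' - A' i j\<bar> \<le> (1 - 1 / real n) * \<delta>" if "i < n" "j < n" "j' < n" "j \<le> j'" for i j j'
  proof -
    have "T j \<subseteq> T j'" using that unfolding T_def by auto
    moreover have "T j \<noteq> {}" using cardT[OF that(2)] by auto
    moreover have "card (T j') \<le> n" using card_mono[OF _ Tsub] by auto
    moreover have "\<forall>l\<in>T j'. \<forall>l'\<in>T j'. \<bar>A i l - A i l'\<bar> \<le> \<delta>" using I Tsub[of j'] that(1) unfolding inv_ok_def by blast
    ultimately have "\<bar>sum (A i) (T j') / card (T j') - sum (A i) (T j) / card (T j)\<bar> \<le> (1 - 1 / real n) * \<delta>"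
      by (intro avg_osc finT)
    then show ?thesis using A'T that by simp
  qed
  have osc: "\<forall>i<n. \<forall>j<n. \<forall>j'<n. \<bar>A' i j - A' i j'\<bar> \<le> (1 - 1 / real n) * \<delta>"
  proof (intro allI impI)
    fix i j j' assume "i < n" "j < n" "j' < n"
    then show "\<bar>A' i j - A' i j'\<bar> \<le> (1 - 1 / real n) * \<delta>"
      using osc1[of i j j'] osc1[of i j' j] by (cases "j \<le> j'") (auto simp: abs_minus_commute)
  qed
  show ?thesis using nn cs osc by (simp add: inv_ok_def)
qed

lemma inv_prod:
  assumes n: "n \<ge> 1" shows "set Bs \<subseteq> PW n \<Longrightarrow> inv_ok n (mat_prod_list n Bs) ((1 - 1 / real n) ^ length Bs)"
proof (induction Bs rule: rev_induct)
  case Nil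
  have "(\<Sum>i<n. id_mat n i j) = 1" if "j < n" for j
  proof -
    have "(\<Sum>i<n. id_mat n i j) = (\<Sum>i<n. if i = j then 1 else 0)" by (intro sum.cong) (auto simp: id_mat_def)
    then show ?thesis using that by simp
  qed
  then show ?case by (auto simp: inv_ok_def mat_prod_list_def id_mat_def)
next
  case (snoc B Bs)
  then have I: "inv_ok n (mat_prod_list n Bs) ((1 - 1 / real n) ^ length Bs)" and "B \<in> PW n" by auto
  then obtain k where k: "k permutes {..<n}"
    and Bk: "\<forall>l<n. \<forall>j<n. B l j = (if k l \<le> j then 1 / real (j+1) else 0)"
    using PW_entry by blast
  have "inv_ok n (mat_prod_list n (Bs @ [B])) ((1 - 1 / real n) * (1 - 1 / real n) ^ length Bs)"
  proof (rule inv_step[OF n I k])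
    fix i j assume "i < n" "j < n"
    then show "mat_prod_list n (Bs @ [B]) i j = (\<Sum>l<n. mat_prod_list n Bs i l * (if k l \<le> j then 1 / real (j + 1) else 0))"
      using Bk by (simp add: prod_snoc)
  qed
  then show ?case by simp
qed

lemma prod_diff:
  fixes a b :: "nat \<Rightarrow> real"
  assumes "finite I" "\<forall>i\<in>I. 0 \<le> a i \<and> a i \<le> 1" "\<forall>i\<in>I. 0 \<le> b i \<and> b i \<le> 1"
  shows "\<bar>prod a I - prod b I\<bar> \<le> (\<Sum>i\<in>I. \<bar>a i - b i\<bar>)"
  using assms
proof (induction I rule: finite_induct)
  case empty
  then show ?case by simp
next
  case (insert x F)
  let ?PA = "prod a F" and ?PB = "prod b F"
  have pa: "0 \<le> ?PA" "?PA \<le> 1" using insert by (auto intro: prod_nonneg prod_le_1)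
  have bx: "0 \<le> b x" "b x \<le> 1" using insert by auto
  have IH: "\<bar>?PA - ?PB\<bar> \<le> (\<Sum>i\<in>F. \<bar>a i - b i\<bar>)" using insert by auto
  have "a x * ?PA - b x * ?PB = (a x - b x) * ?PA + b x * (?PA - ?PB)" by (simp add: algebra_simps)
  then have "\<bar>a x * ?PA - b x * ?PB\<bar> \<le> \<bar>a x - b x\<bar> * ?PA + b x * \<bar>?PA - ?PB\<bar>"
    using pa bx by (simp add: abs_mult) (metis abs_mult abs_of_nonneg abs_triangle_ineq)
  also have "\<dots> \<le> \<bar>a x - b x\<bar> * 1 + 1 * \<bar>?PA - ?PB\<bar>"
    using pa bx by (intro add_mono mult_mono) auto
  also have "\<dots> \<le> \<bar>a x - b x\<bar> + (\<Sum>i\<in>F. \<bar>a i - b i\<bar>)" using IH by simp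
  finally show ?case using insert by simp
qed

lemma HH_pos:
  assumes n: "n \<ge> 1" and I: "inv_ok n A \<epsilon>"
    and dl: "\<forall>p. (\<forall>i<n. p i \<ge> 0) \<and> (\<Sum>i<n. p i) = 1 \<longrightarrow> form_eval n d c p \<ge> \<delta>"
    and small: "(\<Sum>\<alpha>\<in>monomials n d. \<bar>c \<alpha>\<bar>) * (real d * \<epsilon>) < \<delta>"
    and w: "w \<in> Wd n d"
  shows "HH n d c A w > 0"
proof -
  define p where "p i = A i 0" for i
  have n0: "0 < n" using n by simp
  have Ann: "0 \<le> A i j" if "i < n" "j < n" for i j using I that by (simp add: inv_ok_def)
  have Ale: "A i j \<le> 1" if "i < n" "j < n" for i j
  proof -
    have "A i j \<le> (\<Sum>i<n. A i j)" using that Ann by (intro member_le_sum) auto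
    then show ?thesis using I that by (simp add: inv_ok_def)
  qed
  have "form_eval n d c p \<ge> \<delta>" using dl I n0 by (simp add: p_def inv_ok_def)
  have wt: "w t < n" if "t < d" for t using w that unfolding Wd_def by auto
  have D: "\<bar>(\<Prod>t<d. A (us n d \<alpha> t) (w t)) - (\<Prod>j<n. p j ^ \<alpha> j)\<bar> \<le> real d * \<epsilon>"
    if a: "\<alpha> \<in> monomials n d" for \<alpha>
  proof -
    let ?u = "us n d \<alpha>"
    have ut: "?u t < n" if "t < d" for t using us(1)[OF a] that unfolding Wd_def by auto
    have "(\<Prod>j<n. p j ^ \<alpha> j) = (\<Prod>t<d. p (?u t))"
      using prod_cnt[OF us(1)[OF a], of p] us(2)[OF a] by simp
    moreover have "\<bar>(\<Prod>t<d. A (?u t) (w t)) - (\<Prod>t<d. p (?u t))\<bar> \<le> (\<Sum>t<d. \<bar>A (?u t) (w t) - p (?u t)\<bar>)"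
      using ut wt Ann Ale n0 by (intro prod_diff) (auto simp: p_def)
    moreover have "(\<Sum>t<d. \<bar>A (?u t) (w t) - p (?u t)\<bar>) \<le> (\<Sum>t<d. \<epsilon>)"
      using ut wt I n0 by (intro sum_mono) (auto simp: p_def inv_ok_def)
    ultimately show ?thesis by simp
  qed
  define Dv where "Dv \<alpha> = (\<Prod>t<d. A (us n d \<alpha> t) (w t)) - (\<Prod>j<n. p j ^ \<alpha> j)" for \<alpha>
  have "HH n d c A w = form_eval n d c p + (\<Sum>\<alpha>\<in>monomials n d. c \<alpha> * Dv \<alpha>)"
    unfolding HH_def form_eval_def Dv_def by (simp add: algebra_simps sum.distrib[symmetric])
  moreover have "(\<Sum>\<alpha>\<in>monomials n d. c \<alpha> * Dv \<alpha>) \<ge> - (\<Sum>\<alpha>\<in>monomials n d. \<bar>c \<alpha>\<bar> * (real d * \<epsilon>))"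
  proof -
    have "(\<Sum>\<alpha>\<in>monomials n d. - (\<bar>c \<alpha>\<bar> * (real d * \<epsilon>))) \<le> (\<Sum>\<alpha>\<in>monomials n d. c \<alpha> * Dv \<alpha>)"
    proof (rule sum_mono)
      fix \<alpha> assume a: "\<alpha> \<in> monomials n d"
      have "\<bar>c \<alpha> * Dv \<alpha>\<bar> \<le> \<bar>c \<alpha>\<bar> * (real d * \<epsilon>)"
        unfolding abs_mult using D[OF a] by (intro mult_left_mono) (auto simp: Dv_def)
      then show "- (\<bar>c \<alpha>\<bar> * (real d * \<epsilon>)) \<le> c \<alpha> * Dv \<alpha>" by linarith
    qed
    then show ?thesis by (simp add: sum_negf)
  qed
  moreover have "(\<Sum>\<alpha>\<in>monomials n d. \<bar>c \<alpha>\<bar> * (real d * \<epsilon>)) = (\<Sum>\<alpha>\<in>monomials n d. \<bar>c \<alpha>\<bar>) * (real d * \<epsilon>)"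
    by (simp add: sum_distrib_right)
  ultimately show ?thesis using small \<open>form_eval n d c p \<ge> \<delta>\<close> by linarith
qed

theorem corollary4p1:
  fixes n d :: nat and c :: "(nat \<Rightarrow> nat) \<Rightarrow> real"
  assumes "n \<ge> 1"
    and "\<forall>X. (\<forall>i<n. X i \<ge> 0) \<and> (\<Sum>i<n. X i) = 1 \<longrightarrow> form_eval n d c X > 0"
  shows "\<exists>M::nat. \<forall>m\<ge>M. \<forall>Bs. length Bs = m \<and> set Bs \<subseteq> PW n \<longrightarrow>
           (\<exists>g. (\<forall>\<beta>\<in>monomials n d. g \<beta> > 0) \<and>
                (\<forall>X. form_eval n d c (mat_vec n (mat_prod_list n Bs) X) = form_eval n d g X))"
proof -
  obtain \<delta> where \<delta>: "\<delta> > 0" and dl: "\<forall>p. (\<forall>i<n. p i \<ge> 0) \<and> (\<Sum>i<n. p i) = 1 \<longrightarrow> form_eval n d c p \<ge> \<delta>"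
    using form_min[OF assms] by blast
  define C where "C = (\<Sum>\<alpha>\<in>monomials n d. \<bar>c \<alpha>\<bar>)"
  have C0: "C \<ge> 0" unfolding C_def by (intro sum_nonneg) auto
  define \<epsilon> where "\<epsilon> = \<delta> / (C * real d + 1)"
  have den: "C * real d + 1 > 0" using C0 by (simp add: add_nonneg_pos)
  have \<epsilon>0: "\<epsilon> > 0" unfolding \<epsilon>_def using \<delta> den by simp
  have small: "C * (real d * \<epsilon>) < \<delta>"
  proof -
    have "C * (real d * \<epsilon>) = \<delta> * (C * real d) / (C * real d + 1)" unfolding \<epsilon>_def by simp
    also have "\<dots> < \<delta>" using den \<delta> by (simp add: field_simps)
    finally show ?thesis .
  qed
  define r where "r = 1 - 1 / real n"
  have r0: "0 \<le> r" "r < 1" using assms(1) unfolding r_def by (auto simp: field_simps)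
  obtain M where M: "r ^ M < \<epsilon>" using real_arch_pow_inv[OF \<epsilon>0 r0(2)] by blast
  show ?thesis
  proof (intro exI[of _ M] allI impI)
    fix m Bs assume m: "M \<le> m" and Bs: "length Bs = m \<and> set Bs \<subseteq> PW n"
    have "r ^ m \<le> r ^ M" using r0 m by (intro power_decreasing) auto
    then have rm: "r ^ m \<le> \<epsilon>" using M by simp
    have I0: "inv_ok n (mat_prod_list n Bs) (r ^ m)" using inv_prod[OF assms(1)] Bs unfolding r_def by auto
    then have I: "inv_ok n (mat_prod_list n Bs) \<epsilon>" using rm unfolding inv_ok_def by (meson order.trans)
    show "\<exists>g. (\<forall>\<beta>\<in>monomials n d. g \<beta> > 0) \<and>
                (\<forall>X. form_eval n d c (mat_vec n (mat_prod_list n Bs) X) = form_eval n d g X)"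
    proof (intro exI[of _ "GG n d c (mat_prod_list n Bs)"] conjI ballI allI)
      fix \<beta> assume b: "\<beta> \<in> monomials n d"
      obtain v where v: "v \<in> Wd n d" "cnt d v = \<beta>" using word_exists[OF b] by blast
      have pos: "HH n d c (mat_prod_list n Bs) w > 0" if "w \<in> Wd n d" for w
        using HH_pos[OF assms(1) I dl _ that] small unfolding C_def by simp
      have f: "finite {x. x \<in> Wd n d \<and> cnt d x = \<beta>}" using finite_Wd by simp
      have ne: "{x. x \<in> Wd n d \<and> cnt d x = \<beta>} \<noteq> {}" using v by blast
      show "GG n d c (mat_prod_list n Bs) \<beta> > 0" unfolding GG_def
        using sum_pos[OF f ne] pos by blast
    next
      fix X show "form_eval n d c (mat_vec n (mat_prod_list n Bs) X) = form_eval n d (GG n d c (mat_prod_list n Bs)) X"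
        by (rule expand)
    qed
  qed
qed

end
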